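(* Let $G=(V,E)$ be a cactus. Then the diameter $d(\mathrm{CUT}(G))$ of the 1-skeleton of $\mathrm{CUT}(G)$ satisfies $$\left\lfloor \frac{|V|}{2}\right\rfloor \le d(\mathrm{CUT}(G)) \le |V|-1.$$
   Context: For an undirected graph $G=(V,E)$ and $S\subseteq V$, $\delta(S)\subseteq E$ denotes the set of edges with exactly one endpoint in $S$, and $\mathbf v(S)\in\{0,1\}^{E}$ is its incidence vector ($v(S)_e=1$ iff $e\in\delta(S)$). The cut polytope is $\mathrm{CUT}(G)=\operatorname{conv}\{\mathbf v(S):S\subseteq V\}\subset\mathbb R^{E}$. The 1-skeleton of a polytope is the graph whose vertices are the polytope's vertices and whose edges are its one-dimensional faces; $d(\cdot)$ denotes the diameter (maximum shortest-path edge distance between two vertices) of this graph. A cactus is a connected graph in which every edge belongs to at most one simple cycle. *)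

theory Defs
  imports "HOL-Analysis.Analysis"
begin

definition graph :: "'v set \<Rightarrow> 'v set set \<Rightarrow> bool" where
  "graph V E \<longleftrightarrow> finite V \<and> (\<forall>e\<in>E. e \<subseteq> V \<and> card e = 2)"

definition gwalk :: "'v set set \<Rightarrow> 'v list \<Rightarrow> bool" where
  "gwalk E xs \<longleftrightarrow> xs \<noteq> [] \<and> (\<forall>i. Suc i < length xs \<longrightarrow> {xs ! i, xs ! Suc i} \<in> E)"

definition gconnected :: "'v set \<Rightarrow> 'v set set \<Rightarrow> bool" where
  "gconnected V E \<longleftrightarrow> V \<noteq> {} \<and>
     (\<forall>u\<in>V. \<forall>v\<in>V. \<exists>xs. gwalk E xs \<and> set xs \<subseteq> V \<and> hd xs = u \<and> last xs = v)"

definition simple_cycle :: "'v set set \<Rightarrow> 'v list \<Rightarrow> bool" where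
  "simple_cycle E vs \<longleftrightarrow> length vs \<ge> 3 \<and> distinct vs \<and>
     (\<forall>i < length vs. {vs ! i, vs ! ((i + 1) mod length vs)} \<in> E)"

definition cycle_edges :: "'v list \<Rightarrow> 'v set set" where
  "cycle_edges vs = {{vs ! i, vs ! ((i + 1) mod length vs)} | i. i < length vs}"

definition cactus :: "'v set \<Rightarrow> 'v set set \<Rightarrow> bool" where
  "cactus V E \<longleftrightarrow> graph V E \<and> gconnected V E \<and>
     (\<forall>e\<in>E. \<forall>C1 C2. simple_cycle E C1 \<longrightarrow> simple_cycle E C2 \<longrightarrow>
        e \<in> cycle_edges C1 \<longrightarrow> e \<in> cycle_edges C2 \<longrightarrow> cycle_edges C1 = cycle_edges C2)"

text \<open>Cuts and cut polytope.  R^E is represented inside real^('v set): the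
coordinates indexed by non-edges are identically 0 on the polytope.\<close>

definition delta :: "'v set set \<Rightarrow> 'v set \<Rightarrow> 'v set set" where
  "delta E S = {e \<in> E. card (e \<inter> S) = 1}"

definition cut_vec :: "'v set set \<Rightarrow> 'v set \<Rightarrow> real ^ ('v::finite set)" where
  "cut_vec E S = (\<chi> e. if e \<in> delta E S then 1 else 0)"

definition CUT :: "('v::finite) set \<Rightarrow> 'v set set \<Rightarrow> (real ^ ('v set)) set" where
  "CUT V E = convex hull {cut_vec E S | S. S \<subseteq> V}"

definition poly_vertices :: "('a::euclidean_space) set \<Rightarrow> 'a set" where
  "poly_vertices P = {x. {x} face_of P}"

definition skel_adj :: "('a::euclidean_space) set \<Rightarrow> 'a \<Rightarrow> 'a \<Rightarrow> bool" where
  "skel_adj P x y \<longleftrightarrow> x \<in> poly_vertices P \<and> y \<in> poly_vertices P \<and> x \<noteq> y \<and>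
     (\<exists>F. F face_of P \<and> aff_dim F = 1 \<and> x \<in> F \<and> y \<in> F)"

definition skel_walk :: "('a::euclidean_space) set \<Rightarrow> 'a list \<Rightarrow> bool" where
  "skel_walk P xs \<longleftrightarrow> xs \<noteq> [] \<and> set xs \<subseteq> poly_vertices P \<and>
     (\<forall>i. Suc i < length xs \<longrightarrow> skel_adj P (xs ! i) (xs ! Suc i))"

definition skel_dist :: "('a::euclidean_space) set \<Rightarrow> 'a \<Rightarrow> 'a \<Rightarrow> nat" where
  "skel_dist P x y = (LEAST n. \<exists>xs. skel_walk P xs \<and> hd xs = x \<and> last xs = y \<and> length xs = n + 1)"

definition skel_diameter :: "('a::euclidean_space) set \<Rightarrow> nat" where
  "skel_diameter P = Max {skel_dist P x y | x y. x \<in> poly_vertices P \<and> y \<in> poly_vertices P}"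

end

theory Submission
  imports Defs
begin


definition B01 :: "(real^'n) set" where "B01 = {a. \<forall>e. a$e = 0 \<or> a$e = 1}"

lemma agree_inner:
  fixes s a :: "real^'n"
  assumes "s \<in> B01" "a \<in> B01"
  shows "(\<chi> e. if e\<in>K then (if s$e = 1 then 1 else -1) else 0) \<bullet> a
         = (\<Sum>e\<in>K. s$e) - (\<Sum>e\<in>K. \<bar>a$e - s$e\<bar>)"
proof -
  have "(\<chi> e. if e\<in>K then (if s$e = 1 then 1 else -1) else 0) \<bullet> a
        = (\<Sum>e\<in>UNIV. (if e\<in>K then s$e - \<bar>a$e - s$e\<bar> else 0))"
    unfolding inner_vec_def
  proof (rule sum.cong)
    fix e assume "e \<in> (UNIV::'n set)"
    have "s$e = 0 \<or> s$e = 1" "a$e = 0 \<or> a$e = 1" using assms by (auto simp: B01_def)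
    then show "(\<chi> e. if e\<in>K then (if s$e = 1 then 1 else -1) else 0)$e \<bullet> a$e
       = (if e\<in>K then s$e - \<bar>a$e - s$e\<bar> else 0)" by auto
  qed simp
  also have "\<dots> = (\<Sum>e\<in>K. s$e - \<bar>a$e - s$e\<bar>)"
    by (simp add: sum.If_cases)
  also have "\<dots> = (\<Sum>e\<in>K. s$e) - (\<Sum>e\<in>K. \<bar>a$e - s$e\<bar>)"
    by (simp add: sum_subtractf)
  finally show ?thesis .
qed

lemma agree_face:
  fixes C :: "(real^'n) set"
  assumes "finite C" "C \<subseteq> B01" "s \<in> B01"
  shows "convex hull {a\<in>C. \<forall>e\<in>K. a$e = s$e} face_of convex hull C"
proof -
  define c :: "real^'n" where "c = (\<chi> e. if e\<in>K then (if s$e = 1 then 1 else -1) else 0)"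
  define m where "m = (\<Sum>e\<in>K. s$e)"
  define D where "D = {a\<in>C. \<forall>e\<in>K. a$e = s$e}"
  have fK: "finite K" by simp
  have cv: "c \<bullet> a = m - (\<Sum>e\<in>K. \<bar>a$e - s$e\<bar>)" if "a \<in> C" for a
  proof -
    have "a \<in> B01" using assms(2) that by blast
    then show ?thesis unfolding c_def m_def by (rule agree_inner[OF assms(3)])
  qed
  have le: "c \<bullet> a \<le> m" if "a \<in> C" for a
  proof -
    have "0 \<le> (\<Sum>e\<in>K. \<bar>a$e - s$e\<bar>)" by (rule sum_nonneg) simp
    then show ?thesis using cv[OF that] by linarith
  qed
  have eq: "c \<bullet> a = m \<longleftrightarrow> (\<forall>e\<in>K. a$e = s$e)" if "a \<in> C" for a
  proof -
    have "c \<bullet> a = m \<longleftrightarrow> (\<Sum>e\<in>K. \<bar>a$e - s$e\<bar>) = 0" using cv[OF that] by linarith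
    also have "\<dots> \<longleftrightarrow> (\<forall>e\<in>K. \<bar>a$e - s$e\<bar> = 0)"
      by (rule sum_nonneg_eq_0_iff[OF fK]) simp
    also have "\<dots> \<longleftrightarrow> (\<forall>e\<in>K. a$e = s$e)" by simp
    finally show ?thesis .
  qed
  have hs: "convex hull C \<subseteq> {x. c \<bullet> x \<le> m}"
  proof (rule hull_minimal)
    show "C \<subseteq> {x. c \<bullet> x \<le> m}" using le by blast
    show "convex {x. c \<bullet> x \<le> m}" by (rule convex_halfspace_le)
  qed
  define F where "F = convex hull C \<inter> {x. c \<bullet> x = m}"
  have F: "F face_of convex hull C"
    unfolding F_def
  proof (rule face_of_Int_supporting_hyperplane_le)
    show "convex (convex hull C)" by (rule convex_convex_hull)
    show "c \<bullet> x \<le> m" if "x \<in> convex hull C" for x using hs that by blast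
  qed
  obtain C' where C': "C' \<subseteq> C" "F = convex hull C'"
    using face_of_convex_hull_subset[OF finite_imp_compact[OF assms(1)] F] by blast
  have "C' \<subseteq> D"
  proof
    fix x assume x: "x \<in> C'"
    then have "x \<in> F" using C'(2) hull_subset[of C' convex] by blast
    then have "c \<bullet> x = m" unfolding F_def by blast
    moreover have "x \<in> C" using x C'(1) by blast
    ultimately show "x \<in> D" using eq unfolding D_def by blast
  qed
  then have "F \<subseteq> convex hull D" unfolding C'(2) by (rule hull_mono)
  moreover have "D \<subseteq> F"
  proof
    fix x assume x: "x \<in> D"
    then have xC: "x \<in> C" unfolding D_def by blast
    then have "c \<bullet> x = m" using eq x unfolding D_def by blast
    moreover have "x \<in> convex hull C" using xC hull_subset[of C convex] by blast
    ultimately show "x \<in> F" unfolding F_def by blast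
  qed
  then have "convex hull D \<subseteq> F"
    using face_of_imp_convex[OF F] by (rule hull_minimal)
  ultimately have "F = convex hull D" by blast
  then show ?thesis using F unfolding D_def by simp
qed

lemma vertex_face:
  fixes C :: "(real^'n) set"
  assumes "finite C" "C \<subseteq> B01" "s \<in> C"
  shows "{s} face_of convex hull C"
proof -
  have "{a\<in>C. \<forall>e\<in>UNIV. a$e = s$e} = {s}" using assms(3) by (auto simp: vec_eq_iff)
  then show ?thesis using agree_face[OF assms(1,2), of s UNIV] assms by auto
qed

lemma mid_lemma:
  fixes x y a b :: "real^'n"
  assumes F: "F face_of convex hull C" "aff_dim F = 1" "x\<in>F" "y\<in>F" "x\<noteq>y"
    and ab: "a \<in> convex hull C" "b \<in> convex hull C" "a + b = x + y"
    and bb: "a\<in>B01" "b\<in>B01" "x\<in>B01" "y\<in>B01"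
  shows "a = x \<or> a = y"
proof -
  obtain e where e: "x$e \<noteq> y$e" using F(5) by (auto simp: vec_eq_iff)
  have xe: "x$e = 0 \<or> x$e = 1" "y$e = 0 \<or> y$e = 1" "a$e = 0 \<or> a$e = 1" "b$e = 0 \<or> b$e = 1"
    using bb by (auto simp: B01_def)
  have abe: "a$e + b$e = x$e + y$e" using ab(3) by (metis vector_add_component)
  have "a \<noteq> b"
  proof
    assume "a = b" then show False using abe xe e by auto
  qed
  have cvF: "convex F" using face_of_imp_convex[OF F(1)] .
  have "closed_segment x y \<subseteq> F" using cvF F(3,4) by (simp add: convex_contains_segment)
  then have "midpoint x y \<in> F" using midpoint_in_closed_segment[of x y] by (rule subsetD)
  moreover have "midpoint a b = midpoint x y" using ab(3) by (simp add: midpoint_def)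
  ultimately have mF: "midpoint a b \<in> F" by simp
  have "midpoint a b \<in> open_segment a b" using \<open>a\<noteq>b\<close> by simp
  then have "a \<in> F" using face_ofD[OF F(1) _ ab(1,2) mF] by blast
  have "affine hull {x,y} = affine hull F"
  proof (rule affine_dim_equal)
    show "affine hull {x,y} \<subseteq> affine hull F" using F(3,4) by (simp add: hull_mono)
    show "aff_dim (affine hull {x, y}) = aff_dim (affine hull F)"
      using F(2,5) by (simp add: aff_dim_affine_hull)
    show "affine (affine hull {x,y})" by (rule affine_affine_hull)
    show "affine (affine hull F)" by (rule affine_affine_hull)
    show "affine hull {x,y} \<noteq> {}" by simp
  qed
  moreover have "a \<in> affine hull F" using hull_subset[of F affine] \<open>a\<in>F\<close> by auto
  ultimately have "a \<in> affine hull {x,y}" by simp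
  then obtain u v where uv: "a = u *\<^sub>R x + v *\<^sub>R y" "u + v = 1"
    using affine_hull_2[of x y] by blast
  then have ae: "a$e = u * x$e + v * y$e" by simp
  consider (c1) "x$e=0" "y$e=1" | (c2) "x$e=1" "y$e=0" using xe e by (metis (mono_tags))
  then have "(u = 1 \<and> v = 0) \<or> (u = 0 \<and> v = 1)"
  proof cases
    case c1
    then have "a$e = v" using ae by simp
    then show ?thesis using xe(3) uv(2) by linarith
  next
    case c2
    then have "a$e = u" using ae by simp
    then show ?thesis using xe(3) uv(2) by linarith
  qed
  then show ?thesis
  proof (elim disjE conjE)
    assume "u = 1" "v = 0" then show ?thesis using uv(1) by simp
  next
    assume "u = 0" "v = 1" then show ?thesis using uv(1) by simp
  qed
qed



fun wk :: "'v set set \<Rightarrow> 'v list \<Rightarrow> bool" where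
  "wk E [] = True"
| "wk E [x] = True"
| "wk E (x#y#xs) = ({x,y}\<in>E \<and> wk E (y#xs))"

lemma wk_Cons: "wk E (x#xs) \<longleftrightarrow> (xs = [] \<or> ({x, hd xs}\<in>E \<and> wk E xs))"
  by (cases xs) auto

lemma wk_append:
  "wk E (xs @ ys) \<longleftrightarrow> wk E xs \<and> wk E ys \<and> (xs \<noteq> [] \<longrightarrow> ys \<noteq> [] \<longrightarrow> {last xs, hd ys} \<in> E)"
proof (induction xs)
  case Nil then show ?case by simp
next
  case (Cons x xs)
  show ?case
  proof (cases xs)
    case Nil then show ?thesis by (cases ys) (auto simp: wk_Cons)
  next
    case (Cons y zs)
    then show ?thesis using Cons.IH by (simp add: wk_Cons)
  qed
qed

lemma wk_rev: "wk E (rev xs) = wk E xs"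
proof (induction xs)
  case Nil then show ?case by simp
next
  case (Cons x xs)
  have "wk E (rev (x#xs)) = wk E (rev xs @ [x])" by simp
  also have "\<dots> = (wk E xs \<and> (xs \<noteq> [] \<longrightarrow> {hd xs, x} \<in> E))"
    using Cons.IH by (simp add: wk_append last_rev)
  also have "\<dots> = wk E (x#xs)" using insert_commute[of "hd xs" x "{}"] by (cases xs) (simp_all add: wk_Cons, blast)
  finally show ?case .
qed

lemma gwalk_Cons2: "gwalk E (x#y#zs) \<longleftrightarrow> {x,y}\<in>E \<and> gwalk E (y#zs)"
proof
  assume g: "gwalk E (x#y#zs)"
  have "Suc 0 < length (x#y#zs)" by simp
  then have "{(x#y#zs)!0, (x#y#zs)!Suc 0} \<in> E" using g unfolding gwalk_def by blast
  then have "{x,y}\<in>E" by simp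
  moreover have "gwalk E (y#zs)" unfolding gwalk_def
  proof (intro conjI allI impI)
    fix i assume "Suc i < length (y#zs)"
    then have "Suc (Suc i) < length (x#y#zs)" by simp
    then have "{(x#y#zs) ! Suc i, (x#y#zs) ! Suc (Suc i)} \<in> E" using g unfolding gwalk_def by blast
    then show "{(y#zs) ! i, (y#zs) ! Suc i} \<in> E" by simp
  qed simp
  ultimately show "{x,y}\<in>E \<and> gwalk E (y#zs)" by blast
next
  assume h: "{x,y}\<in>E \<and> gwalk E (y#zs)"
  show "gwalk E (x#y#zs)" unfolding gwalk_def
  proof (intro conjI allI impI)
    fix i assume i: "Suc i < length (x#y#zs)"
    show "{(x#y#zs) ! i, (x#y#zs) ! Suc i} \<in> E"
    proof (cases i)
      case 0 then show ?thesis using h by simp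
    next
      case (Suc j)
      then have "Suc j < length (y#zs)" using i by simp
      then have "{(y#zs) ! j, (y#zs) ! Suc j} \<in> E" using h unfolding gwalk_def by blast
      then show ?thesis using Suc by simp
    qed
  qed simp
qed

lemma gwalk_wk: "gwalk E xs \<longleftrightarrow> xs \<noteq> [] \<and> wk E xs"
proof (induction xs rule: wk.induct)
  case (1 E) then show ?case by (simp add: gwalk_def)
next
  case (2 E x) then show ?case by (simp add: gwalk_def)
next
  case (3 E x y xs) then show ?case by (simp add: gwalk_Cons2)
qed

definition wlk :: "'v set set \<Rightarrow> 'v set \<Rightarrow> 'v \<Rightarrow> 'v \<Rightarrow> 'v list \<Rightarrow> bool" where
  "wlk E A u v xs \<longleftrightarrow> xs \<noteq> [] \<and> wk E xs \<and> set xs \<subseteq> A \<and> hd xs = u \<and> last xs = v"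

definition conn :: "'v set set \<Rightarrow> 'v set \<Rightarrow> bool" where
  "conn E A \<longleftrightarrow> (\<forall>u\<in>A. \<forall>v\<in>A. \<exists>xs. wlk E A u v xs)"

lemma wlk_refl: "u \<in> A \<Longrightarrow> wlk E A u u [u]"
  by (simp add: wlk_def)

lemma wlk_ends: "wlk E A u v xs \<Longrightarrow> u \<in> A \<and> v \<in> A"
  unfolding wlk_def by (metis hd_in_set last_in_set subsetD)

lemma wlk_rev: "wlk E A u v xs \<Longrightarrow> wlk E A v u (rev xs)"
  by (simp add: wlk_def wk_rev hd_rev last_rev)

lemma wlk_snoc: "wlk E A u v xs \<Longrightarrow> {v,w} \<in> E \<Longrightarrow> w \<in> A \<Longrightarrow> wlk E A u w (xs @ [w])"
  by (auto simp: wlk_def wk_append)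

lemma wlk_join: "wlk E A u v xs \<Longrightarrow> wlk E A v w ys \<Longrightarrow> wlk E A u w (xs @ tl ys)"
proof -
  assume a: "wlk E A u v xs" "wlk E A v w ys"
  show ?thesis
  proof (cases "tl ys")
    case Nil
    then have "ys = [v]" using a(2) unfolding wlk_def by (metis hd_Cons_tl)
    then show ?thesis using a Nil by (simp add: wlk_def)
  next
    case (Cons y zs)
    then have ys: "ys = v # y # zs" using a(2) unfolding wlk_def by (metis hd_Cons_tl)
    then show ?thesis using a Cons unfolding wlk_def by (auto simp: wk_append)
  qed
qed

lemma wlk_mono: "wlk E A u v xs \<Longrightarrow> A \<subseteq> B \<Longrightarrow> wlk E B u v xs"
  unfolding wlk_def by blast

lemma conn_gconnected: "gconnected V E \<Longrightarrow> conn E V"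
  unfolding gconnected_def conn_def wlk_def by (auto simp: gwalk_wk)

lemma wlk_cross:
  "wlk E A u v xs \<Longrightarrow> u \<in> X \<Longrightarrow> v \<notin> X \<Longrightarrow> \<exists>a b. {a,b}\<in>E \<and> a\<in>A \<and> b\<in>A \<and> a\<in>X \<and> b\<notin>X"
proof (induction xs arbitrary: u)
  case Nil then show ?case by (simp add: wlk_def)
next
  case (Cons x xs)
  show ?case
  proof (cases xs)
    case Nil then show ?thesis using Cons.prems by (auto simp: wlk_def)
  next
    case (Cons y zs)
    have w: "wlk E A y v xs" "{x,y} \<in> E" "x = u" "x \<in> A" "y \<in> A"
      using Cons.prems(1) Cons unfolding wlk_def by auto
    show ?thesis
    proof (cases "y \<in> X")
      case True then show ?thesis using Cons.IH[OF w(1) True Cons.prems(3)] by blast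
    next
      case False then show ?thesis using w Cons.prems(2) by blast
    qed
  qed
qed

lemma wlk_distinct:
  "wlk E A u v xs \<Longrightarrow> \<exists>ys. wlk E A u v ys \<and> distinct ys"
proof (induction "length xs" arbitrary: xs rule: less_induct)
  case less
  show ?case
  proof (cases "distinct xs")
    case True then show ?thesis using less.prems by blast
  next
    case False
    then obtain as y bs cs where xs: "xs = as @ [y] @ bs @ [y] @ cs"
      using not_distinct_decomp by blast
    let ?ys = "as @ [y] @ cs"
    have wk: "wk E xs" using less.prems unfolding wlk_def by blast
    then have "wk E as" "as \<noteq> [] \<longrightarrow> {last as, y} \<in> E" "wk E (y # bs @ y # cs)"
      unfolding xs by (auto simp: wk_append)
    then have "wk E (y # cs)" by (metis append_Cons wk_append)
    then have "wk E ?ys" using \<open>wk E as\<close> \<open>as \<noteq> [] \<longrightarrow> {last as, y} \<in> E\<close>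
      by (auto simp: wk_append)
    moreover have "set ?ys \<subseteq> A" using less.prems unfolding wlk_def xs by auto
    moreover have "hd ?ys = u" using less.prems unfolding wlk_def xs by (cases as) auto
    moreover have "last ?ys = v" using less.prems unfolding wlk_def xs by (cases cs) auto
    ultimately have "wlk E A u v ?ys" unfolding wlk_def by simp
    moreover have "length ?ys < length xs" unfolding xs by simp
    ultimately show ?thesis using less.hyps by blast
  qed
qed

definition gd :: "'v set set \<Rightarrow> 'v set \<Rightarrow> 'v \<Rightarrow> 'v \<Rightarrow> nat" where
  "gd E A r v = (LEAST n. \<exists>xs. wlk E A r v xs \<and> length xs = Suc n)"

lemma gd_wit:
  assumes "wlk E A r v xs"
  shows "\<exists>ys. wlk E A r v ys \<and> length ys = Suc (gd E A r v)"
proof -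
  have "\<exists>n. \<exists>xs. wlk E A r v xs \<and> length xs = Suc n"
    using assms unfolding wlk_def by (metis length_greater_0_conv Suc_pred)
  then show ?thesis unfolding gd_def by (rule LeastI_ex)
qed

lemma gd_le:
  assumes "wlk E A r v xs" "length xs = Suc n"
  shows "gd E A r v \<le> n"
  unfolding gd_def using assms by (blast intro: Least_le)

lemma gd_zero: "wlk E A r v xs \<Longrightarrow> gd E A r v = 0 \<Longrightarrow> v = r"
  using gd_wit[of E A r v xs] unfolding wlk_def
  by (metis One_nat_def hd_conv_nth last_conv_nth length_0_conv diff_Suc_1 nat.simps(3))

lemma gd_self: "r \<in> A \<Longrightarrow> gd E A r r = 0"
  using gd_le[of E A r r "[r]" 0] wlk_refl[of r A E] by simp

lemma parent:
  assumes c: "conn E A" and r: "r \<in> A" and v: "v \<in> A" "v \<noteq> r"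
  shows "\<exists>p\<in>A. {p,v}\<in>E \<and> Suc (gd E A r p) = gd E A r v"
proof -
  obtain xs where xs: "wlk E A r v xs" using c r v unfolding conn_def by blast
  obtain ys where ys: "wlk E A r v ys" "length ys = Suc (gd E A r v)" using gd_wit[OF xs] by blast
  define zs where "zs = butlast ys"
  have "ys \<noteq> []" "last ys = v" using ys(1) unfolding wlk_def by auto
  then have ysz: "ys = zs @ [v]" unfolding zs_def by (metis append_butlast_last_id)
  have y1: "wk E (zs@[v])" "set (zs@[v]) \<subseteq> A" "hd (zs@[v]) = r"
    using ys(1) unfolding ysz wlk_def by auto
  have "zs \<noteq> []" using y1(3) v(2) by auto
  define p where "p = last zs"
  have wz: "wk E zs" "{p, v} \<in> E" using y1(1) \<open>zs \<noteq> []\<close> unfolding wk_append p_def by auto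
  have "hd zs = r" using y1(3) \<open>zs \<noteq> []\<close> by simp
  have "set zs \<subseteq> A" using y1(2) by simp
  have "wlk E A r p zs" unfolding wlk_def
  proof (intro conjI)
    show "last zs = p" by (simp add: p_def)
  qed (fact+)
  then have pA: "p \<in> A" using wlk_ends[OF \<open>wlk E A r p zs\<close>] by simp
  have l: "length zs = gd E A r v" using ys(2) ysz by simp
  have le1: "Suc (gd E A r p) \<le> gd E A r v"
    using gd_le[OF \<open>wlk E A r p zs\<close>, of "gd E A r v - 1"] l \<open>zs \<noteq> []\<close> by (cases "gd E A r v") auto
  obtain ws where ws: "wlk E A r p ws" "length ws = Suc (gd E A r p)"
    using gd_wit[OF \<open>wlk E A r p zs\<close>] by blast
  have "wlk E A r v (ws @ [v])" using wlk_snoc[OF ws(1) wz(2) v(1)] .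
  then have "gd E A r v \<le> Suc (gd E A r p)" using gd_le[of E A r v "ws @ [v]"] ws(2) by simp
  then show ?thesis using le1 pA wz(2) by auto
qed

lemma conn_insert:
  assumes c: "conn E B" and p: "p \<in> B" and e: "{z,p} \<in> E"
  shows "conn E (insert z B)"
  unfolding conn_def
proof (intro ballI)
  fix u w assume u: "u \<in> insert z B" and w: "w \<in> insert z B"
  have zp: "wlk E (insert z B) z p [z,p]" using e p by (simp add: wlk_def)
  have pz: "wlk E (insert z B) p z [p,z]" using e p by (simp add: wlk_def insert_commute)
  have cB: "\<exists>xs. wlk E (insert z B) a b xs" if ab: "a \<in> B" "b \<in> B" for a b
  proof -
    have "\<forall>u\<in>B. \<forall>v\<in>B. \<exists>xs. wlk E B u v xs" using c by (simp only: conn_def)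
    then obtain xs where "wlk E B a b xs" using ab by blast
    then have "wlk E (insert z B) a b xs" by (rule wlk_mono) blast
    then show ?thesis by blast
  qed
  show "\<exists>xs. wlk E (insert z B) u w xs"
  proof (cases "u = z")
    case True
    show ?thesis
    proof (cases "w = z")
      case True then show ?thesis using \<open>u = z\<close> wlk_refl[of z "insert z B" E] by blast
    next
      case False
      then have "w \<in> B" using w by blast
      then obtain xs where xs: "wlk E (insert z B) p w xs" using cB p by blast
      show ?thesis using wlk_join[OF zp xs] True by blast
    qed
  next
    case False
    then have uB: "u \<in> B" using u by blast
    show ?thesis
    proof (cases "w = z")
      case True
      obtain xs where xs: "wlk E (insert z B) u p xs" using cB p uB by blast
      show ?thesis using wlk_join[OF xs pz] True by blast
    next
      case False
      then have "w \<in> B" using w by blast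
      then show ?thesis using cB uB by blast
    qed
  qed
qed

lemma noncut:
  assumes fin: "finite A" and c: "conn E A" and two: "card A \<ge> 2"
  shows "\<exists>z\<in>A. \<exists>p\<in>A-{z}. conn E (A - {z}) \<and> {z,p}\<in>E"
proof -
  obtain r where r: "r \<in> A" using two by fastforce
  obtain w where w: "w \<in> A" "w \<noteq> r"
  proof -
    have "card (A - {r}) = card A - 1" using r fin by (simp add: card_Diff_singleton)
    then have "card (A - {r}) \<noteq> 0" using two by simp
    then have "A - {r} \<noteq> {}" by (metis card.empty)
    then show ?thesis using that by blast
  qed
  let ?d = "gd E A r"
  have fi: "finite (?d ` A)" using fin by simp
  have ne: "?d ` A \<noteq> {}" using r by blast
  obtain z where zA: "z \<in> A" "?d z = Max (?d ` A)" using Max_in[OF fi ne] by auto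
  have z: "z \<in> A" "\<forall>u\<in>A. ?d u \<le> ?d z"
    using zA Max_ge[OF fi] by auto
  have dw: "?d w \<noteq> 0"
  proof
    assume "?d w = 0"
    obtain xs where "wlk E A r w xs" using c r w unfolding conn_def by blast
    then have "w = r" using gd_zero \<open>?d w = 0\<close> by metis
    then show False using w(2) by simp
  qed
  have "?d w \<le> ?d z" using z(2) w(1) by blast
  then have "?d z \<noteq> 0" using dw by linarith
  then have zr: "z \<noteq> r" using gd_self[OF r, of E] by metis
  have reach: "\<forall>u\<in>A-{z}. ?d u = k \<longrightarrow> (\<exists>xs. wlk E (A-{z}) r u xs)" for k
  proof (induction k)
    case 0
    show ?case
    proof (intro ballI impI)
      fix u assume u: "u \<in> A - {z}" "?d u = 0"
      obtain xs where "wlk E A r u xs" using c r u unfolding conn_def by blast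
      then have "u = r" using gd_zero u(2) by metis
      then show "\<exists>xs. wlk E (A-{z}) r u xs" using wlk_refl[of u "A-{z}" E] u(1) by blast
    qed
  next
    case (Suc k)
    show ?case
    proof (intro ballI impI)
      fix u assume u: "u \<in> A - {z}" "?d u = Suc k"
      have "u \<noteq> r" using u gd_self[OF r, of E] by auto
      have uA: "u \<in> A" using u(1) by blast
      obtain p where p: "p \<in> A" "{p,u}\<in>E" "Suc (?d p) = ?d u" using parent[OF c r uA \<open>u \<noteq> r\<close>] by blast
      have "p \<noteq> z" using p(3) z(2) u by (metis DiffD1 Suc_n_not_le_n)
      have "p \<in> A - {z}" using p(1) \<open>p \<noteq> z\<close> by blast
      moreover have "?d p = k" using p(3) u(2) by simp
      ultimately obtain xs where xs: "wlk E (A-{z}) r p xs" using Suc.IH by blast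
      show "\<exists>xs. wlk E (A-{z}) r u xs" using wlk_snoc[OF xs p(2) u(1)] by blast
    qed
  qed
  have cz: "conn E (A - {z})" unfolding conn_def
  proof (intro ballI)
    fix u v assume u: "u \<in> A - {z}" and v: "v \<in> A - {z}"
    obtain xs where xs: "wlk E (A-{z}) r u xs" using reach u by blast
    obtain ys where ys: "wlk E (A-{z}) r v ys" using reach v by blast
    show "\<exists>xs. wlk E (A-{z}) u v xs" using wlk_join[OF wlk_rev[OF xs] ys] by blast
  qed
  obtain p where p: "p \<in> A" "{p,z}\<in>E" "Suc (?d p) = ?d z" using parent[OF c r z(1) zr] by blast
  have "p \<noteq> z" using p(3) by auto
  then show ?thesis using z(1) p cz by (metis Diff_iff insert_commute singletonD)
qed



definition sd :: "'a set \<Rightarrow> 'a set \<Rightarrow> 'a set" where "sd X Y = (X - Y) \<union> (Y - X)"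

fun sdl :: "'a set list \<Rightarrow> 'a set" where
  "sdl [] = {}"
| "sdl (U#Us) = sd U (sdl Us)"

lemma sdl_app: "x \<in> sdl (xs @ ys) \<longleftrightarrow> ((x \<in> sdl xs) \<noteq> (x \<in> sdl ys))"
  by (induction xs) (auto simp: sd_def)

lemma sdl_map: "(\<forall>U\<in>set Us. x \<in> f U \<longleftrightarrow> x \<in> U) \<Longrightarrow> x \<in> sdl (map f Us) \<longleftrightarrow> x \<in> sdl Us"
  by (induction Us) (auto simp: sd_def)

lemma sdl_sub: "(\<forall>U\<in>set Us. U \<subseteq> A) \<Longrightarrow> sdl Us \<subseteq> A"
  by (induction Us) (auto simp: sd_def)

definition shore :: "'v set set \<Rightarrow> 'v set \<Rightarrow> 'v set \<Rightarrow> bool" where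
  "shore E A U \<longleftrightarrow> U \<subseteq> A \<and> U \<noteq> {} \<and> A - U \<noteq> {} \<and> conn E U \<and> conn E (A - U)"

lemma conn_single: "conn E {z}"
  unfolding conn_def using wlk_refl[of z "{z}" E] by blast

lemma shore_lift:
  assumes s: "shore E (A - {z}) U" and z: "z \<in> A" and p: "p \<in> A - {z}" and e: "{z,p} \<in> E"
  shows "shore E A (if p \<in> U then insert z U else U)"
proof (cases "p \<in> U")
  case True
  have "A - insert z U = (A - {z}) - U" by blast
  moreover have "conn E (insert z U)" using conn_insert[of E U p z] s True e unfolding shore_def by blast
  ultimately show ?thesis using s True z unfolding shore_def by auto
next
  case False
  have eq: "A - U = insert z ((A - {z}) - U)" using s z unfolding shore_def by blast
  have "conn E (insert z ((A - {z}) - U))"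
    using conn_insert[of E "(A - {z}) - U" p z] s False e p unfolding shore_def by blast
  then show ?thesis using s False z eq unfolding shore_def by auto
qed

lemma decomp:
  assumes "finite A" "conn E A" "A \<noteq> {}" "W \<subseteq> A"
  shows "\<exists>Us. length Us \<le> card A - 1 \<and> (\<forall>U\<in>set Us. shore E A U) \<and> (sdl Us = W \<or> sdl Us = A - W)"
  using assms
proof (induction "card A" arbitrary: A W rule: less_induct)
  case less
  show ?case
  proof (cases "card A \<ge> 2")
    case False
    have "card A \<noteq> 0" using less.prems(1,3) by simp
    then have "card A = 1" using False by linarith
    then obtain a where a: "A = {a}" by (rule card_1_singletonE)
    have "W = {} \<or> W = A" using less.prems(4) a by blast
    then have "sdl [] = W \<or> sdl [] = A - W" by auto
    then show ?thesis by (intro exI[of _ "[]"]) simp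
  next
    case True
    obtain z p where z: "z \<in> A" and p: "p \<in> A - {z}" and cz: "conn E (A - {z})" and e: "{z,p} \<in> E"
      using noncut[OF less.prems(1,2) True] by blast
    define A' where "A' = A - {z}"
    have cA': "card A' = card A - 1" unfolding A'_def using z less.prems(1) by (simp add: card_Diff_singleton)
    have lt: "card A' < card A" using cA' True by simp
    have fA': "finite A'" using less.prems(1) unfolding A'_def by simp
    have neA': "A' \<noteq> {}" using p unfolding A'_def by blast
    have WA': "W - {z} \<subseteq> A'" using less.prems(4) unfolding A'_def by blast
    obtain Us' where Us': "length Us' \<le> card A' - 1" "\<forall>U\<in>set Us'. shore E A' U"
        "sdl Us' = W - {z} \<or> sdl Us' = A' - (W - {z})"
      using less.hyps[OF lt fA' cz[folded A'_def] neA' WA'] by blast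
    define L where "L U = (if p \<in> U then insert z U else U)" for U
    define Us1 where "Us1 = map L Us'"
    define T where "T = (if sdl Us' = W - {z} then W else A - W)"
    define Us where "Us = Us1 @ (if (z \<in> sdl Us1) = (z \<in> T) then [] else [{z}])"
    have len: "length Us \<le> card A - 1"
    proof -
      have "length Us \<le> length Us' + 1" unfolding Us_def Us1_def by simp
      also have "\<dots> \<le> card A - 1" using Us'(1) cA' neA' fA' True by linarith
      finally show ?thesis .
    qed
    have sh1: "shore E A U" if U1: "U \<in> set Us1" for U
    proof -
      obtain U' where U': "U' \<in> set Us'" "U = L U'" using U1 unfolding Us1_def by auto
      have "shore E (A - {z}) U'" using Us'(2) U'(1) unfolding A'_def by blast
      then show ?thesis using shore_lift[OF _ z p e] U'(2) unfolding L_def by blast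
    qed
    have shz: "shore E A {z}"
      unfolding shore_def using z neA' cz conn_single[of E z] unfolding A'_def by blast
    have sh: "\<forall>U\<in>set Us. shore E A U" using sh1 shz unfolding Us_def by auto
    have TA: "T \<subseteq> A" unfolding T_def using less.prems(4) by auto
    have sub': "\<forall>U\<in>set Us'. U \<subseteq> A'" using Us'(2) unfolding shore_def by blast
    have mem: "x \<in> sdl Us \<longleftrightarrow> x \<in> T" for x
    proof (cases "x = z")
      case True
      show ?thesis unfolding Us_def using True by (auto simp: sdl_app sd_def)
    next
      case False
      have x1: "x \<in> sdl Us \<longleftrightarrow> x \<in> sdl Us1" unfolding Us_def using False by (auto simp: sdl_app sd_def)
      have x2: "x \<in> sdl Us1 \<longleftrightarrow> x \<in> sdl Us'" unfolding Us1_def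
        by (rule sdl_map) (use False in \<open>auto simp: L_def\<close>)
      show ?thesis
      proof (cases "x \<in> A")
        case True
        then have xA': "x \<in> A'" using False unfolding A'_def by blast
        show ?thesis using Us'(3) x1 x2 xA' False unfolding T_def A'_def by auto
      next
        case xn: False
        have "sdl Us' \<subseteq> A'" using sdl_sub[OF sub'] .
        then have "x \<notin> sdl Us'" using xn unfolding A'_def by blast
        moreover have "x \<notin> T" using TA xn by blast
        ultimately show ?thesis using x1 x2 by simp
      qed
    qed
    then have "sdl Us = T" by blast
    then have "sdl Us = W \<or> sdl Us = A - W" unfolding T_def by auto
    then show ?thesis using len sh by blast
  qed
qed



lemma card_pair_int: "a \<noteq> b \<Longrightarrow> card ({a,b} \<inter> S) = 1 \<longleftrightarrow> ((a\<in>S) \<noteq> (b\<in>S))"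
  by (cases "a \<in> S"; cases "b \<in> S") (simp_all add: Int_insert_left)

lemma edge_pair:
  assumes "graph V E" "e \<in> E"
  shows "\<exists>a b. e = {a,b} \<and> a \<noteq> b \<and> a \<in> V \<and> b \<in> V"
proof -
  have "e \<subseteq> V" "card e = 2" using assms unfolding graph_def by auto
  then obtain a b where "e = {a,b}" "a \<noteq> b" by (meson card_2_iff)
  then show ?thesis using \<open>e \<subseteq> V\<close> by blast
qed

lemma delta_pair: "a \<noteq> b \<Longrightarrow> {a,b} \<in> delta E S \<longleftrightarrow> {a,b} \<in> E \<and> ((a\<in>S) \<noteq> (b\<in>S))"
  unfolding delta_def using card_pair_int[of a b S] by simp

lemma delta_sd:
  assumes g: "graph V E"
  shows "e \<in> delta E (sd S U) \<longleftrightarrow> e \<in> E \<and> ((e \<in> delta E S) \<noteq> (e \<in> delta E U))"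
proof (cases "e \<in> E")
  case True
  then obtain a b where ab: "e = {a,b}" "a \<noteq> b" using edge_pair[OF g] by blast
  show ?thesis unfolding ab using delta_pair[OF ab(2)] True ab(1) by (auto simp: sd_def)
next
  case False then show ?thesis by (simp add: delta_def)
qed

lemma delta_compl:
  assumes g: "graph V E"
  shows "delta E (V - S) = delta E S"
proof
  show "delta E (V - S) \<subseteq> delta E S"
  proof
    fix e assume e: "e \<in> delta E (V - S)"
    then have eE: "e \<in> E" by (simp add: delta_def)
    then obtain a b where ab: "e = {a,b}" "a \<noteq> b" "a \<in> V" "b \<in> V" using edge_pair[OF g] by blast
    show "e \<in> delta E S" using e eE unfolding ab delta_pair[OF ab(2)] using ab by auto
  qed
next
  show "delta E S \<subseteq> delta E (V - S)"
  proof
    fix e assume e: "e \<in> delta E S"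
    then have eE: "e \<in> E" by (simp add: delta_def)
    then obtain a b where ab: "e = {a,b}" "a \<noteq> b" "a \<in> V" "b \<in> V" using edge_pair[OF g] by blast
    show "e \<in> delta E (V - S)" using e eE unfolding ab delta_pair[OF ab(2)] using ab by auto
  qed
qed

lemma delta_empty: "delta E {} = {}"
  by (simp add: delta_def)

lemma delta_V:
  assumes g: "graph V E" shows "delta E V = {}"
proof -
  have "delta E (V - {}) = delta E {}" by (rule delta_compl[OF g])
  then show ?thesis by (simp add: delta_empty)
qed

lemma delta_sub_E: "delta E S \<subseteq> E" by (auto simp: delta_def)

lemma cv_comp: "(cut_vec E S) $ e = (if e \<in> delta E S then 1 else 0)"
  by (simp add: cut_vec_def)

lemma cv_eq: "cut_vec E S = cut_vec E T \<longleftrightarrow> delta E S = delta E T"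
proof
  assume "cut_vec E S = cut_vec E T"
  then have "\<forall>e. (cut_vec E S) $ e = (cut_vec E T) $ e" by simp
  then have "\<forall>e. (e \<in> delta E S) = (e \<in> delta E T)" unfolding cv_comp
    by (metis (full_types) zero_neq_one)
  then show "delta E S = delta E T" by blast
next
  assume "delta E S = delta E T" then show "cut_vec E S = cut_vec E T" by (simp add: cut_vec_def)
qed

lemma cv_B01: "cut_vec E S \<in> B01"
  unfolding B01_def by (simp add: cv_comp)

lemma wt_cv: "{e. (cut_vec E S) $ e = 1} = delta E S"
  by (simp add: cv_comp)

definition CC :: "'v set \<Rightarrow> 'v set set \<Rightarrow> (real^('v::finite set)) set" where
  "CC V E = {cut_vec E S | S. S \<subseteq> V}"

lemma CUT_CC: "CUT V E = convex hull (CC V E)"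
  by (simp add: CUT_def CC_def)

lemma CC_fin: "finite (CC V E)"
proof -
  have "CC V E = (\<lambda>S. cut_vec E S) ` {S. S \<subseteq> V}" unfolding CC_def by blast
  then show ?thesis by simp
qed

lemma CC_B01: "CC V E \<subseteq> B01"
  unfolding CC_def using cv_B01 by blast

lemma pv_CC: "poly_vertices (CUT V E) = CC V E"
proof
  show "poly_vertices (CUT V E) \<subseteq> CC V E"
  proof
    fix x assume "x \<in> poly_vertices (CUT V E)"
    then have "{x} face_of convex hull (CC V E)" unfolding poly_vertices_def CUT_CC by simp
    then have "x extreme_point_of convex hull (CC V E)" by (simp add: face_of_singleton)
    then show "x \<in> CC V E" by (rule extreme_point_of_convex_hull)
  qed
next
  show "CC V E \<subseteq> poly_vertices (CUT V E)"
  proof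
    fix x assume x: "x \<in> CC V E"
    have "{x} face_of convex hull (CC V E)" by (rule vertex_face[OF CC_fin CC_B01 x])
    then show "x \<in> poly_vertices (CUT V E)" unfolding poly_vertices_def CUT_CC by simp
  qed
qed

lemma sd_sub: "S \<subseteq> V \<Longrightarrow> U \<subseteq> V \<Longrightarrow> sd S U \<subseteq> V"
  by (auto simp: sd_def)

lemma sd_assoc: "sd S (sd U X) = sd (sd S U) X"
  by (auto simp: sd_def)

lemma sd_inv: "sd S (sd S T) = T"
  by (auto simp: sd_def)

lemma delta_cross:
  assumes g: "graph V E" and c: "conn E V" and U: "u \<in> U" "w \<in> V" "w \<notin> U" "u \<in> V"
  shows "delta E U \<noteq> {}"
proof -
  obtain xs where "wlk E V u w xs" using c U unfolding conn_def by blast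
  then obtain a b where ab: "{a,b}\<in>E" "a\<in>V" "b\<in>V" "a\<in>U" "b\<notin>U" using wlk_cross[of E V u w xs U] U by blast
  then have "a \<noteq> b" by blast
  then have "{a,b} \<in> delta E U" using delta_pair[of a b E U] ab by simp
  then show ?thesis by blast
qed



lemma delta_sd_cong:
  assumes g: "graph V E" and "delta E X = delta E Y"
  shows "delta E (sd S X) = delta E (sd S Y)"
  using assms(2) delta_sd[OF g, of _ S X] delta_sd[OF g, of _ S Y] by blast

lemma delta_sd_empty:
  assumes g: "graph V E" and "delta E X = {}"
  shows "delta E (sd S X) = delta E S"
  using assms(2) delta_sd[OF g, of _ S X] delta_sub_E[of E S] by blast

lemma conn_side:
  assumes cZ: "conn E Z" and hZ: "\<forall>a\<in>Z. \<forall>b\<in>Z. (a\<in>U) = (b\<in>U)"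
    and dX: "delta E X \<subseteq> delta E U"
  shows "X \<inter> Z = {} \<or> Z \<subseteq> X"
proof (rule ccontr)
  assume "\<not> (X \<inter> Z = {} \<or> Z \<subseteq> X)"
  then obtain u w where u: "u \<in> X" "u \<in> Z" and w: "w \<in> Z" "w \<notin> X" by blast
  obtain xs where "wlk E Z u w xs" using cZ u w unfolding conn_def by blast
  then obtain a b where ab: "{a,b}\<in>E" "a\<in>Z" "b\<in>Z" "a\<in>X" "b\<notin>X"
    using wlk_cross[of E Z u w xs X] u w by blast
  then have "a \<noteq> b" by blast
  then have "{a,b} \<in> delta E X" using delta_pair[of a b E X] ab by simp
  then have "{a,b} \<in> delta E U" using dX by blast
  then have "(a\<in>U) \<noteq> (b\<in>U)" using delta_pair[of a b E U] \<open>a \<noteq> b\<close> by simp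
  then show False using hZ ab(2,3) by blast
qed

lemma adj_shore:
  assumes g: "graph V E" and c: "conn E V" and S: "S \<subseteq> V" and sh: "shore E V U"
  shows "skel_adj (CUT V E) (cut_vec E S) (cut_vec E (sd S U))"
proof -
  define x where "x = cut_vec E S"
  define y where "y = cut_vec E (sd S U)"
  have U: "U \<subseteq> V" "U \<noteq> {}" "V - U \<noteq> {}" "conn E U" "conn E (V - U)"
    using sh unfolding shore_def by auto
  have xC: "x \<in> CC V E" unfolding x_def CC_def using S by blast
  have yC: "y \<in> CC V E" unfolding y_def CC_def using sd_sub[OF S U(1)] by blast
  obtain u where u: "u \<in> U" using U(2) by blast
  obtain w where w: "w \<in> V" "w \<notin> U" using U(3) by blast
  have dU: "delta E U \<noteq> {}" using delta_cross[OF g c u w] u U(1) by blast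
  then obtain e0 where e0: "e0 \<in> delta E U" by blast
  then have "e0 \<in> E" using delta_sub_E by blast
  then have "(e0 \<in> delta E (sd S U)) \<noteq> (e0 \<in> delta E S)" using delta_sd[OF g, of e0 S U] e0 by blast
  then have "delta E S \<noteq> delta E (sd S U)" by blast
  then have xy: "x \<noteq> y" unfolding x_def y_def cv_eq .
  define K where "K = {e. e \<notin> delta E U}"
  define D where "D = {a\<in>CC V E. \<forall>e\<in>K. a$e = x$e}"
  have face: "convex hull D face_of convex hull (CC V E)"
    unfolding D_def by (rule agree_face[OF CC_fin CC_B01 cv_B01[of E S, folded x_def]])
  have "D = {x,y}"
  proof
    show "{x,y} \<subseteq> D"
    proof -
      have "y$e = x$e" if "e \<in> K" for e
      proof -
        have "e \<notin> delta E U" using that unfolding K_def by blast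
        then have "(e \<in> delta E (sd S U)) = (e \<in> delta E S)"
          using delta_sd[OF g, of e S U] delta_sub_E[of E S] by blast
        then show ?thesis unfolding x_def y_def cv_comp by simp
      qed
      then show ?thesis unfolding D_def using xC yC by blast
    qed
  next
    show "D \<subseteq> {x,y}"
    proof
      fix a assume aD: "a \<in> D"
      then obtain R where R: "R \<subseteq> V" "a = cut_vec E R" unfolding D_def CC_def by blast
      define X where "X = sd S R"
      have XV: "X \<subseteq> V" unfolding X_def using S R(1) by (rule sd_sub)
      have RX: "R = sd S X" unfolding X_def by (simp add: sd_inv)
      have dX: "delta E X \<subseteq> delta E U"
      proof
        fix e assume eX: "e \<in> delta E X"
        then have eE: "e \<in> E" and ne: "(e \<in> delta E S) \<noteq> (e \<in> delta E R)"
          using delta_sd[OF g, of e S R] unfolding X_def by blast+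
        show "e \<in> delta E U"
        proof (rule ccontr)
          assume "e \<notin> delta E U"
          then have "a$e = x$e" using aD unfolding D_def K_def by blast
          then have "(e \<in> delta E R) = (e \<in> delta E S)" unfolding R(2) x_def cv_comp
            by (metis zero_neq_one)
          then show False using ne by simp
        qed
      qed
      have h1: "\<forall>a\<in>U. \<forall>b\<in>U. (a\<in>U) = (b\<in>U)" by blast
      have h2: "\<forall>a\<in>V-U. \<forall>b\<in>V-U. (a\<in>U) = (b\<in>U)" by blast
      have s1: "X \<inter> U = {} \<or> U \<subseteq> X" by (rule conn_side[OF U(4) h1 dX])
      have s2: "X \<inter> (V-U) = {} \<or> V - U \<subseteq> X" by (rule conn_side[OF U(5) h2 dX])
      have "X = {} \<or> X = U \<or> X = V - U \<or> X = V" using s1 s2 XV U(1) by blast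
      then have "delta E X = {} \<or> delta E X = delta E U"
        using delta_empty[of E] delta_V[OF g] delta_compl[OF g, of U] by auto
      then show "a \<in> {x,y}"
      proof
        assume "delta E X = {}"
        then have "delta E R = delta E S" unfolding RX by (rule delta_sd_empty[OF g])
        then have "a = x" unfolding R(2) x_def cv_eq .
        then show ?thesis by blast
      next
        assume "delta E X = delta E U"
        then have "delta E R = delta E (sd S U)" unfolding RX by (rule delta_sd_cong[OF g])
        then have "a = y" unfolding R(2) y_def cv_eq .
        then show ?thesis by blast
      qed
    qed
  qed
  define F where "F = convex hull {x,y}"
  have Ff: "F face_of CUT V E" unfolding F_def CUT_CC using face \<open>D = {x,y}\<close> by simp
  have Fd: "aff_dim F = 1" unfolding F_def aff_dim_convex_hull using xy by simp
  have xyF: "x \<in> F" "y \<in> F" unfolding F_def using hull_subset[of "{x,y}" convex] by blast+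
  have pv: "x \<in> poly_vertices (CUT V E)" "y \<in> poly_vertices (CUT V E)"
    unfolding pv_CC using xC yC by blast+
  show ?thesis unfolding skel_adj_def x_def[symmetric] y_def[symmetric]
    using pv xy Ff Fd xyF by blast
qed



lemma three_elems:
  assumes "finite A" "3 \<le> card A"
  shows "\<exists>a b c. a\<in>A \<and> b\<in>A \<and> c\<in>A \<and> a\<noteq>b \<and> a\<noteq>c \<and> b\<noteq>c"
proof -
  obtain a where a: "a \<in> A" using assms by fastforce
  have c1: "card (A - {a}) \<ge> 2" using assms a by (simp add: card_Diff_singleton)
  have "A - {a} \<noteq> {}" using c1 by (metis card.empty not_numeral_le_zero)
  then obtain b where b: "b \<in> A - {a}" by blast
  have c2: "card (A - {a} - {b}) \<ge> 1" using c1 b assms(1) by (simp add: card_Diff_singleton)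
  have "A - {a} - {b} \<noteq> {}" using c2 by (metis card.empty not_one_le_zero)
  then obtain c where c: "c \<in> A - {a} - {b}" by blast
  show ?thesis using a b c by blast
qed

lemma cyc_edges:
  assumes w: "wk E L" and ne: "L \<noteq> []" and e: "{last L, hd L} \<in> E"
  shows "\<forall>k<length L. {L!k, L!((k+1) mod length L)} \<in> E"
proof (intro allI impI)
  fix k assume k: "k < length L"
  have g: "gwalk E L" using w ne by (simp add: gwalk_wk)
  show "{L!k, L!((k+1) mod length L)} \<in> E"
  proof (cases "Suc k < length L")
    case True
    then have "(k+1) mod length L = Suc k" by simp
    moreover have "{L!k, L!Suc k} \<in> E" using g True unfolding gwalk_def by blast
    ultimately show ?thesis by simp
  next
    case False
    then have kk: "k = length L - 1" using k by simp
    then have "k + 1 = length L" using k by simp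
    then have "(k+1) mod length L = 0" by simp
    moreover have "L!k = last L" using kk ne by (simp add: last_conv_nth)
    moreover have "L!0 = hd L" using ne by (simp add: hd_conv_nth)
    ultimately show ?thesis using e by simp
  qed
qed

lemma edge_ne:
  assumes g: "graph V E" and "{a,b} \<in> E" shows "a \<noteq> b"
proof
  assume "a = b"
  then have "card {a,b} = 1" by simp
  moreover have "card {a,b} = 2" using g assms(2) unfolding graph_def by blast
  ultimately show False by simp
qed

lemma build_cycle:
  assumes g: "graph V E" and UV: "U \<subseteq> V" and cU: "conn E U" and cW: "conn E (V - U)"
    and ai: "ai \<in> U" and bi: "bi \<in> V - U" and aj: "aj \<in> U" and bj: "bj \<in> V - U"
    and ei: "{ai,bi} \<in> E" and ej: "{aj,bj} \<in> E" and neq: "{ai,bi} \<noteq> {aj,bj}"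
  shows "\<exists>C. simple_cycle E C \<and> {ai,bi} \<in> cycle_edges C \<and> {aj,bj} \<in> cycle_edges C \<and>
     (\<forall>e\<in>cycle_edges C. e \<in> delta E U \<longrightarrow> e = {ai,bi} \<or> e = {aj,bj})"
proof -
  obtain P0 where "wlk E U ai aj P0" using cU ai aj unfolding conn_def by blast
  then obtain P where P: "wlk E U ai aj P" "distinct P" using wlk_distinct[of E U ai aj P0] by blast
  obtain Q0 where "wlk E (V-U) bi bj Q0" using cW bi bj unfolding conn_def by blast
  then obtain Q where Q: "wlk E (V-U) bi bj Q" "distinct Q" using wlk_distinct[of E "V-U" bi bj Q0] by blast
  have Pf: "P \<noteq> []" "wk E P" "set P \<subseteq> U" "hd P = ai" "last P = aj" using P(1) unfolding wlk_def by auto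
  have Qf: "Q \<noteq> []" "wk E Q" "set Q \<subseteq> V - U" "hd Q = bi" "last Q = bj" using Q(1) unfolding wlk_def by auto
  define L where "L = P @ rev Q"
  define n where "n = length L"
  have nPQ: "n = length P + length Q" unfolding n_def L_def by simp
  have lP: "length P \<ge> 1" "length Q \<ge> 1" using Pf(1) Qf(1) by (simp_all add: Suc_leI)
  have hdL: "hd L = ai" unfolding L_def using Pf by simp
  have lastL: "last L = bi" unfolding L_def using Qf by (simp add: last_rev)
  have wkL: "wk E L" unfolding L_def wk_append using Pf Qf ej by (simp add: wk_rev hd_rev)
  have neL: "L \<noteq> []" unfolding L_def using Pf by simp
  have closeL: "{last L, hd L} \<in> E" using ei hdL lastL by (simp add: insert_commute)
  have edges: "\<forall>k<length L. {L!k, L!((k+1) mod length L)} \<in> E" by (rule cyc_edges[OF wkL neL closeL])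
  have len3: "n \<ge> 3"
  proof (rule ccontr)
    assume "\<not> n \<ge> 3"
    then have "length P = 1" "length Q = 1" using nPQ lP by auto
    then obtain p q where "P = [p]" "Q = [q]" by (metis One_nat_def length_0_conv length_Suc_conv)
    then have "ai = aj" "bi = bj" using Pf Qf by auto
    then show False using neq by simp
  qed
  have dL: "distinct L" unfolding L_def using P(2) Q(2) Pf(3) Qf(3) by auto
  have posU: "L!k \<in> U" if "k < length P" for k
    using that Pf(3) nth_mem[of k P] unfolding L_def by (auto simp: nth_append)
  have posW: "L!k \<in> V - U" if "length P \<le> k" "k < n" for k
  proof -
    have "k - length P < length (rev Q)" using that nPQ by simp
    then have "rev Q ! (k - length P) \<in> set (rev Q)" by (rule nth_mem)
    then have "rev Q ! (k - length P) \<in> set Q" by simp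
    then show ?thesis using that Qf(3) unfolding L_def by (auto simp: nth_append)
  qed
  have ci: "{ai,bi} \<in> cycle_edges L"
  proof -
    have k: "n - 1 < n" using len3 by simp
    have "n - 1 + 1 = n" using len3 by simp
    then have "(n - 1 + 1) mod n = 0" by simp
    moreover have "L!(n-1) = bi" using lastL neL unfolding n_def by (simp add: last_conv_nth)
    moreover have "L!0 = ai" using hdL neL by (simp add: hd_conv_nth)
    ultimately have "{ai,bi} = {L!(n-1), L!((n-1+1) mod length L)}" unfolding n_def by (simp add: insert_commute)
    then show ?thesis unfolding cycle_edges_def using k unfolding n_def by blast
  qed
  have cj: "{aj,bj} \<in> cycle_edges L"
  proof -
    define k where "k = length P - 1"
    have k1: "k + 1 = length P" unfolding k_def using lP by simp
    have kn: "k < n" "k + 1 < n" using k1 nPQ lP by auto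
    have "(k + 1) mod n = length P" using kn k1 by simp
    moreover have "L!k = aj" using Pf(1,5) unfolding L_def k_def by (simp add: nth_append last_conv_nth)
    moreover have "L!(length P) = bj" using Qf(1,5) unfolding L_def by (simp add: nth_append hd_rev hd_conv_nth[symmetric])
    ultimately have "{aj,bj} = {L!k, L!((k+1) mod length L)}" unfolding n_def by simp
    then show ?thesis unfolding cycle_edges_def using kn unfolding n_def by blast
  qed
  have cross: "e = {ai,bi} \<or> e = {aj,bj}" if eC: "e \<in> cycle_edges L" and eU: "e \<in> delta E U" for e
  proof -
    obtain k where k: "k < n" "e = {L!k, L!((k+1) mod n)}" using eC unfolding cycle_edges_def n_def by blast
    have eE: "e \<in> E" using eU delta_sub_E by blast
    have ne: "L!k \<noteq> L!((k+1) mod n)" using edge_ne[OF g] eE k(2) by blast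
    have crs: "(L!k \<in> U) \<noteq> (L!((k+1) mod n) \<in> U)" using delta_pair[OF ne, of E U] eU k(2) by blast
    show ?thesis
    proof (cases "Suc k < n")
      case True
      then have m: "(k+1) mod n = Suc k" by simp
      show ?thesis
      proof (cases "Suc k < length P")
        case True
        then have "L!k \<in> U" "L!(Suc k) \<in> U" using posU by auto
        then show ?thesis using crs m by simp
      next
        case False
        show ?thesis
        proof (cases "length P \<le> k")
          case True
          then have "L!k \<in> V - U" "L!(Suc k) \<in> V - U" using posW \<open>Suc k < n\<close> by auto
          then show ?thesis using crs m by simp
        next
          case False
          then have k1: "k + 1 = length P" using \<open>\<not> Suc k < length P\<close> by simp
          have kP: "k = length P - 1" using k1 by simp
          have "L!k = aj" using Pf(1,5) k1 unfolding L_def kP by (simp add: nth_append last_conv_nth)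
          moreover have "L!(length P) = bj" using Qf(1,5) unfolding L_def by (simp add: nth_append hd_rev hd_conv_nth[symmetric])
          ultimately show ?thesis using k(2) m k1 by simp
        qed
      qed
    next
      case False
      then have kk: "k = n - 1" using k(1) by simp
      then have "k + 1 = n" using k(1) by simp
      then have "(k+1) mod n = 0" by simp
      moreover have "L!k = bi" using lastL neL kk unfolding n_def by (simp add: last_conv_nth)
      moreover have "L!0 = ai" using hdL neL by (simp add: hd_conv_nth)
      ultimately show ?thesis using k(2) by (simp add: insert_commute)
    qed
  qed
  have "simple_cycle E L" unfolding simple_cycle_def using len3 dL edges unfolding n_def by blast
  then show ?thesis using ci cj cross by blast
qed



lemma orient:
  assumes g: "graph V E" and e: "e \<in> delta E U"
  shows "\<exists>a b. e = {a,b} \<and> a \<in> U \<and> b \<in> V - U"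
proof -
  have eE: "e \<in> E" using e delta_sub_E by blast
  obtain a b where ab: "e = {a,b}" "a \<noteq> b" "a \<in> V" "b \<in> V" using edge_pair[OF g eE] by blast
  have "(a \<in> U) \<noteq> (b \<in> U)" using e delta_pair[OF ab(2), of E U] ab(1) by blast
  then show ?thesis
  proof (cases "a \<in> U")
    case True then show ?thesis using ab \<open>(a \<in> U) \<noteq> (b \<in> U)\<close> by blast
  next
    case False then show ?thesis using ab \<open>(a \<in> U) \<noteq> (b \<in> U)\<close> by (metis Diff_iff insert_commute)
  qed
qed

lemma cactus_two:
  fixes V :: "('v::finite) set"
  assumes cac: "cactus V E" and UV: "U \<subseteq> V" and cU: "conn E U" and cW: "conn E (V - U)"
  shows "card (delta E U) \<le> 2"
proof (rule ccontr)
  assume "\<not> card (delta E U) \<le> 2"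
  then have c3: "3 \<le> card (delta E U)" by simp
  have g: "graph V E" using cac unfolding cactus_def by blast
  have fin: "finite (delta E U)" by simp
  obtain e1 e2 e3 where es: "e1 \<in> delta E U" "e2 \<in> delta E U" "e3 \<in> delta E U"
      "e1 \<noteq> e2" "e1 \<noteq> e3" "e2 \<noteq> e3"
    using three_elems[OF fin c3] by blast
  obtain a1 b1 where 1: "e1 = {a1,b1}" "a1 \<in> U" "b1 \<in> V - U" using orient[OF g es(1)] by blast
  obtain a2 b2 where 2: "e2 = {a2,b2}" "a2 \<in> U" "b2 \<in> V - U" using orient[OF g es(2)] by blast
  obtain a3 b3 where 3: "e3 = {a3,b3}" "a3 \<in> U" "b3 \<in> V - U" using orient[OF g es(3)] by blast
  have eE: "e1 \<in> E" "e2 \<in> E" "e3 \<in> E" using es delta_sub_E by blast+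
  obtain C12 where C12: "simple_cycle E C12" "e1 \<in> cycle_edges C12" "e2 \<in> cycle_edges C12"
      "\<forall>e\<in>cycle_edges C12. e \<in> delta E U \<longrightarrow> e = e1 \<or> e = e2"
    using build_cycle[OF g UV cU cW 1(2) 1(3) 2(2) 2(3)] eE 1(1) 2(1) es(4) by blast
  obtain C13 where C13: "simple_cycle E C13" "e1 \<in> cycle_edges C13" "e3 \<in> cycle_edges C13"
    using build_cycle[OF g UV cU cW 1(2) 1(3) 3(2) 3(3)] eE 1(1) 3(1) es(5) by blast
  have "cycle_edges C12 = cycle_edges C13"
    using cac eE(1) C12(1,2) C13(1,2) unfolding cactus_def by blast
  then have "e3 \<in> cycle_edges C12" using C13(3) by simp
  then have "e3 = e1 \<or> e3 = e2" using C12(4) es(3) by blast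
  then show False using es by blast
qed

lemma split_nonconn:
  assumes g: "graph V E" and c: "conn E V" and ZV: "Z \<subseteq> V" and nc: "\<not> conn E Z"
  shows "\<exists>X. X \<subseteq> V \<and> delta E X \<subseteq> delta E Z \<and> delta E X \<noteq> {} \<and> delta E X \<noteq> delta E Z"
proof -
  obtain u w where u: "u \<in> Z" and w: "w \<in> Z" and nw: "\<not> (\<exists>xs. wlk E Z u w xs)"
    using nc unfolding conn_def by blast
  define X where "X = {v\<in>Z. \<exists>xs. wlk E Z u v xs}"
  have XZ: "X \<subseteq> Z" unfolding X_def by blast
  have clos: "b \<in> X" if ab: "a \<in> X" "b \<in> Z" "{a,b} \<in> E" for a b
  proof -
    obtain xs where xs: "wlk E Z u a xs" using ab(1) unfolding X_def by blast
    have "wlk E Z u b (xs @ [b])" by (rule wlk_snoc[OF xs ab(3) ab(2)])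
    then show ?thesis unfolding X_def using ab(2) by blast
  qed
  have uX: "u \<in> X" unfolding X_def using u wlk_refl[of u Z E] by blast
  have wX: "w \<notin> X" unfolding X_def using nw by blast
  have sub: "delta E X \<subseteq> delta E Z"
  proof
    fix e assume e: "e \<in> delta E X"
    obtain a b where ab: "e = {a,b}" "a \<in> X" "b \<in> V - X" using orient[OF g e] by blast
    have eE: "e \<in> E" using e delta_sub_E by blast
    have "b \<notin> Z" using clos[of a b] ab eE by blast
    then have "(a \<in> Z) \<noteq> (b \<in> Z)" using ab(2) XZ by blast
    moreover have "a \<noteq> b" using ab by blast
    ultimately show "e \<in> delta E Z" using delta_pair[of a b E Z] eE ab(1) by simp
  qed
  have ne: "delta E X \<noteq> {}" using delta_cross[OF g c uX, of w] w wX ZV u by blast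
  have neq: "delta E X \<noteq> delta E Z"
  proof -
    obtain xs where xs: "wlk E V w u xs" using c u w ZV unfolding conn_def by blast
    have wY: "w \<in> Z - X" using w wX by blast
    have uY: "u \<notin> Z - X" using uX by blast
    obtain a b where ab: "{a,b}\<in>E" "a\<in>V" "b\<in>V" "a \<in> Z - X" "b \<notin> Z - X"
      using wlk_cross[OF xs wY uY] by blast
    have "b \<notin> Z"
    proof
      assume "b \<in> Z"
      then have "b \<in> X" using ab(5) by blast
      moreover have "{b,a} \<in> E" using ab(1) by (simp add: insert_commute)
      ultimately have "a \<in> X" using clos[of b a] ab(4) by blast
      then show False using ab(4) by blast
    qed
    have "a \<noteq> b" using ab by blast
    have "{a,b} \<in> delta E Z" using delta_pair[OF \<open>a\<noteq>b\<close>, of E Z] ab(1,4) \<open>b \<notin> Z\<close> by blast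
    moreover have "{a,b} \<notin> delta E X" using delta_pair[OF \<open>a\<noteq>b\<close>, of E X] ab(4) \<open>b \<notin> Z\<close> XZ by blast
    ultimately show ?thesis by blast
  qed
  show ?thesis using XZ ZV sub ne neq by blast
qed



lemma adj_small:
  fixes V :: "('v::finite) set"
  assumes cac: "cactus V E" and S: "S \<subseteq> V" and T: "T \<subseteq> V"
    and adj: "skel_adj (CUT V E) (cut_vec E S) (cut_vec E T)"
  shows "card (delta E (sd S T)) \<le> 2"
proof -
  have g: "graph V E" using cac unfolding cactus_def by blast
  have c: "conn E V" using cac conn_gconnected unfolding cactus_def by blast
  define U where "U = sd S T"
  have UV: "U \<subseteq> V" unfolding U_def using S T by (rule sd_sub)
  have TU: "T = sd S U" unfolding U_def by (simp add: sd_inv)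
  define x where "x = cut_vec E S"
  define y where "y = cut_vec E T"
  obtain F where F: "F face_of CUT V E" "aff_dim F = 1" "x \<in> F" "y \<in> F" and xy: "x \<noteq> y"
    using adj unfolding skel_adj_def x_def y_def by blast
  have F': "F face_of convex hull (CC V E)" using F(1) unfolding CUT_CC .
  have nosplit: False if X: "X \<subseteq> V" "delta E X \<subseteq> delta E U" "delta E X \<noteq> {}" "delta E X \<noteq> delta E U" for X
  proof -
    define a where "a = cut_vec E (sd S X)"
    define b where "b = cut_vec E (sd S (sd U X))"
    have aC: "a \<in> CC V E" unfolding a_def CC_def using sd_sub[OF S X(1)] by blast
    have bC: "b \<in> CC V E" unfolding b_def CC_def using sd_sub[OF S sd_sub[OF UV X(1)]] by blast
    have ah: "a \<in> convex hull (CC V E)" using aC hull_subset[of "CC V E" convex] by blast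
    have bh: "b \<in> convex hull (CC V E)" using bC hull_subset[of "CC V E" convex] by blast
    have sum: "a + b = x + y"
    proof -
      have "(a + b) $ e = (x + y) $ e" for e
      proof -
        have hX: "e \<in> delta E X \<longrightarrow> e \<in> delta E U" using X(2) by blast
        have hS: "e \<in> delta E S \<longrightarrow> e \<in> E" using delta_sub_E by blast
        have hU: "e \<in> delta E U \<longrightarrow> e \<in> E" using delta_sub_E by blast
        show ?thesis unfolding a_def b_def x_def y_def TU vector_add_component cv_comp
          using hX hS hU
          by (cases "e \<in> E"; cases "e \<in> delta E S"; cases "e \<in> delta E U"; cases "e \<in> delta E X")
             (simp_all add: delta_sd[OF g])
      qed
      then show ?thesis by (simp add: vec_eq_iff)
    qed
    have "a = x \<or> a = y"
      by (rule mid_lemma[OF F' F(2) F(3) F(4) xy ah bh sum])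
         (simp_all add: a_def b_def x_def y_def cv_B01)
    then show False
    proof
      assume "a = x"
      then have dd: "delta E (sd S X) = delta E S" unfolding a_def x_def cv_eq .
      obtain e where e: "e \<in> delta E X" using X(3) by blast
      then have "e \<in> E" using delta_sub_E by blast
      then show False using dd e delta_sd[OF g, of e S X] by blast
    next
      assume "a = y"
      then have dd: "delta E (sd S X) = delta E (sd S U)" unfolding a_def y_def TU cv_eq .
      have "delta E U \<subseteq> delta E X"
      proof
        fix e assume e: "e \<in> delta E U"
        then have "e \<in> E" using delta_sub_E by blast
        then show "e \<in> delta E X" using dd e delta_sd[OF g, of e S X] delta_sd[OF g, of e S U] by blast
      qed
      then show False using X(2,4) by blast
    qed
  qed
  have cU: "conn E U"
  proof (rule ccontr)
    assume "\<not> conn E U"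
    then obtain X where "X \<subseteq> V" "delta E X \<subseteq> delta E U" "delta E X \<noteq> {}" "delta E X \<noteq> delta E U"
      using split_nonconn[OF g c UV] by blast
    then show False using nosplit by blast
  qed
  have cW: "conn E (V - U)"
  proof (rule ccontr)
    assume "\<not> conn E (V - U)"
    then obtain X where "X \<subseteq> V" "delta E X \<subseteq> delta E (V - U)" "delta E X \<noteq> {}" "delta E X \<noteq> delta E (V - U)"
      using split_nonconn[OF g c, of "V - U"] by blast
    then show False using nosplit delta_compl[OF g, of U] by simp
  qed
  show ?thesis using cactus_two[OF cac UV cU cW] unfolding U_def .
qed

lemma skel_walk_Cons:
  assumes "ys \<noteq> []"
  shows "skel_walk P (x # ys) \<longleftrightarrow> x \<in> poly_vertices P \<and> skel_walk P ys \<and> skel_adj P x (hd ys)"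
proof
  assume w: "skel_walk P (x # ys)"
  have "Suc 0 < length (x#ys)" using assms by simp
  then have a: "skel_adj P ((x#ys)!0) ((x#ys)!Suc 0)" using w unfolding skel_walk_def by blast
  have "skel_walk P ys" unfolding skel_walk_def
  proof (intro conjI allI impI)
    show "ys \<noteq> []" by fact
    show "set ys \<subseteq> poly_vertices P" using w unfolding skel_walk_def by simp
    fix i assume "Suc i < length ys"
    then have "Suc (Suc i) < length (x#ys)" by simp
    then have "skel_adj P ((x#ys) ! Suc i) ((x#ys) ! Suc (Suc i))" using w unfolding skel_walk_def by blast
    then show "skel_adj P (ys ! i) (ys ! Suc i)" by simp
  qed
  moreover have "skel_adj P x (hd ys)" using a assms by (simp add: hd_conv_nth)
  moreover have "x \<in> poly_vertices P" using w unfolding skel_walk_def by simp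
  ultimately show "x \<in> poly_vertices P \<and> skel_walk P ys \<and> skel_adj P x (hd ys)" by blast
next
  assume h: "x \<in> poly_vertices P \<and> skel_walk P ys \<and> skel_adj P x (hd ys)"
  show "skel_walk P (x # ys)" unfolding skel_walk_def
  proof (intro conjI allI impI)
    show "x # ys \<noteq> []" by simp
    show "set (x # ys) \<subseteq> poly_vertices P" using h unfolding skel_walk_def by simp
    fix i assume i: "Suc i < length (x#ys)"
    show "skel_adj P ((x#ys) ! i) ((x#ys) ! Suc i)"
    proof (cases i)
      case 0 then show ?thesis using h assms by (simp add: hd_conv_nth)
    next
      case (Suc j)
      then have "Suc j < length ys" using i by simp
      then have "skel_adj P (ys ! j) (ys ! Suc j)" using h unfolding skel_walk_def by blast
      then show ?thesis using Suc by simp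
    qed
  qed
qed

lemma walk_weight:
  fixes V :: "('v::finite) set"
  assumes cac: "cactus V E" and w: "skel_walk (CUT V E) xs"
  shows "i < length xs \<Longrightarrow> card {e. (xs!i)$e = 1} \<le> card {e. (hd xs)$e = 1} + 2*i"
proof (induction i)
  case 0
  then show ?case using w unfolding skel_walk_def by (simp add: hd_conv_nth)
next
  case (Suc i)
  have g: "graph V E" using cac unfolding cactus_def by blast
  have i: "i < length xs" using Suc.prems by simp
  have adj: "skel_adj (CUT V E) (xs!i) (xs!Suc i)" using w Suc.prems unfolding skel_walk_def by blast
  have "xs!i \<in> CC V E" "xs!Suc i \<in> CC V E"
    using w i Suc.prems nth_mem[of i xs] nth_mem[of "Suc i" xs] unfolding skel_walk_def pv_CC by blast+
  then obtain S T where ST: "S \<subseteq> V" "T \<subseteq> V" "xs!i = cut_vec E S" "xs!Suc i = cut_vec E T"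
    unfolding CC_def by blast
  have c2: "card (delta E (sd S T)) \<le> 2" using adj_small[OF cac ST(1,2)] adj ST(3,4) by simp
  have sub: "delta E T \<subseteq> delta E S \<union> delta E (sd S T)"
    using delta_sd[OF g, of _ S T] delta_sub_E[of E T] by blast
  have "card (delta E T) \<le> card (delta E S \<union> delta E (sd S T))" by (rule card_mono[OF _ sub]) simp
  also have "\<dots> \<le> card (delta E S) + card (delta E (sd S T))" by (rule card_Un_le)
  finally have "card (delta E T) \<le> card (delta E S) + 2" using c2 by linarith
  moreover have "card {e. (xs!Suc i)$e = 1} = card (delta E T)" unfolding ST(4) wt_cv ..
  moreover have "card {e. (xs!i)$e = 1} = card (delta E S)" unfolding ST(3) wt_cv ..
  moreover have "2 * Suc i = 2 * i + 2" by simp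
  ultimately show ?case using Suc.IH[OF i] by linarith
qed



lemma maxcut:
  fixes V :: "('v::finite) set"
  assumes g: "graph V E" and c: "conn E V" and r: "r \<in> V"
  shows "\<exists>S\<subseteq>V. card V - 1 \<le> card (delta E S)"
proof -
  define d where "d = gd E V r"
  define S where "S = {u\<in>V. even (d u)}"
  define pp where "pp v = (SOME p. p \<in> V \<and> {p,v}\<in>E \<and> Suc (d p) = d v)" for v
  have ppP: "pp v \<in> V \<and> {pp v, v}\<in>E \<and> Suc (d (pp v)) = d v" if v: "v \<in> V - {r}" for v
  proof -
    have "v \<in> V" "v \<noteq> r" using v by auto
    then have "\<exists>p. p \<in> V \<and> {p,v}\<in>E \<and> Suc (d p) = d v" using parent[OF c r] unfolding d_def by blast
    then show ?thesis unfolding pp_def by (rule someI_ex)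
  qed
  define f where "f v = {pp v, v}" for v
  have fsub: "f ` (V - {r}) \<subseteq> delta E S"
  proof
    fix e assume "e \<in> f ` (V - {r})"
    then obtain v where v: "v \<in> V - {r}" "e = f v" by blast
    have p: "pp v \<in> V" "{pp v, v}\<in>E" "Suc (d (pp v)) = d v" using ppP[OF v(1)] by auto
    have ne: "pp v \<noteq> v" using p(3) by auto
    have par: "even (d (pp v)) \<longleftrightarrow> odd (d v)" using p(3) by (metis even_Suc)
    have "(pp v \<in> S) \<noteq> (v \<in> S)" unfolding S_def using p(1) v(1) par by auto
    then show "e \<in> delta E S" unfolding v(2) f_def using delta_pair[OF ne, of E S] p(2) by blast
  qed
  have inj: "inj_on f (V - {r})"
  proof (rule inj_onI)
    fix v w assume v: "v \<in> V - {r}" and w: "w \<in> V - {r}" and fe: "f v = f w"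
    show "v = w"
    proof (rule ccontr)
      assume vw: "v \<noteq> w"
      have "{pp v, v} = {pp w, w}" using fe unfolding f_def .
      then have "v = pp w \<and> w = pp v" using vw by (auto simp: doubleton_eq_iff)
      then have "Suc (d v) = d w" "Suc (d w) = d v" using ppP[OF v] ppP[OF w] by metis+
      then show False by linarith
    qed
  qed
  have "card (V - {r}) \<le> card (delta E S)"
    using card_inj_on_le[OF inj fsub] by simp
  moreover have "card (V - {r}) = card V - 1" using r by (simp add: card_Diff_singleton)
  moreover have "S \<subseteq> V" unfolding S_def by blast
  ultimately show ?thesis by auto
qed

lemma walk_Us:
  assumes g: "graph V E" and c: "conn E V"
  shows "\<forall>U\<in>set Us. shore E V U \<Longrightarrow> S \<subseteq> V \<Longrightarrow>
     \<exists>xs. skel_walk (CUT V E) xs \<and> hd xs = cut_vec E S \<and> last xs = cut_vec E (sd S (sdl Us))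
       \<and> length xs = Suc (length Us)"
proof (induction Us arbitrary: S)
  case Nil
  have "cut_vec E S \<in> poly_vertices (CUT V E)" unfolding pv_CC CC_def using Nil.prems(2) by blast
  then have "skel_walk (CUT V E) [cut_vec E S]" unfolding skel_walk_def by simp
  moreover have "sd S (sdl []) = S" by (simp add: sd_def)
  ultimately show ?case by (intro exI[of _ "[cut_vec E S]"]) simp
next
  case (Cons U Us)
  have sh: "shore E V U" using Cons.prems(1) by simp
  have S': "sd S U \<subseteq> V" using Cons.prems(2) sh unfolding shore_def by (intro sd_sub) auto
  obtain ys where ys: "skel_walk (CUT V E) ys" "hd ys = cut_vec E (sd S U)"
      "last ys = cut_vec E (sd (sd S U) (sdl Us))" "length ys = Suc (length Us)"
    using Cons.IH[OF _ S'] Cons.prems(1) by auto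
  have ne: "ys \<noteq> []" using ys(1) unfolding skel_walk_def by blast
  have adj: "skel_adj (CUT V E) (cut_vec E S) (hd ys)" unfolding ys(2)
    by (rule adj_shore[OF g c Cons.prems(2) sh])
  have pv: "cut_vec E S \<in> poly_vertices (CUT V E)" unfolding pv_CC CC_def using Cons.prems(2) by blast
  have "skel_walk (CUT V E) (cut_vec E S # ys)" using skel_walk_Cons[OF ne] pv ys(1) adj by blast
  moreover have "last (cut_vec E S # ys) = cut_vec E (sd S (sdl (U # Us)))"
    using ys(3) ne by (simp add: sd_assoc)
  ultimately show ?case using ys(4) by (intro exI[of _ "cut_vec E S # ys"]) simp
qed

lemma dist_walk:
  fixes V :: "('v::finite) set"
  assumes g: "graph V E" and c: "conn E V" and ne: "V \<noteq> {}"
    and x: "x \<in> poly_vertices (CUT V E)" and y: "y \<in> poly_vertices (CUT V E)"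
  shows "\<exists>xs n. n \<le> card V - 1 \<and> skel_walk (CUT V E) xs \<and> hd xs = x \<and> last xs = y \<and> length xs = Suc n"
proof -
  obtain S T where ST: "S \<subseteq> V" "T \<subseteq> V" "x = cut_vec E S" "y = cut_vec E T"
    using x y unfolding pv_CC CC_def by blast
  have W: "sd S T \<subseteq> V" using sd_sub[OF ST(1,2)] .
  obtain Us where Us: "length Us \<le> card V - 1" "\<forall>U\<in>set Us. shore E V U"
      "sdl Us = sd S T \<or> sdl Us = V - sd S T"
    using decomp[OF _ c ne W] by auto
  obtain xs where xs: "skel_walk (CUT V E) xs" "hd xs = cut_vec E S" "last xs = cut_vec E (sd S (sdl Us))"
      "length xs = Suc (length Us)"
    using walk_Us[OF g c Us(2) ST(1)] by blast
  have "cut_vec E (sd S (sdl Us)) = cut_vec E T"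
    using Us(3)
  proof
    assume "sdl Us = sd S T" then show ?thesis by (simp add: sd_inv)
  next
    assume "sdl Us = V - sd S T"
    then have "sd S (sdl Us) = V - T" using ST(1,2) by (auto simp: sd_def)
    then show ?thesis unfolding cv_eq using delta_compl[OF g, of T] by simp
  qed
  then show ?thesis using xs Us(1) ST(3,4) by auto
qed



theorem theorem4:
  fixes V :: "('v::finite) set" and E :: "'v set set"
  assumes "cactus V E"
  shows "card V div 2 \<le> skel_diameter (CUT V E) \<and> skel_diameter (CUT V E) \<le> card V - 1"
proof -
  have cac: "cactus V E" by fact
  have g: "graph V E" using cac unfolding cactus_def by blast
  have c: "conn E V" using cac conn_gconnected unfolding cactus_def by blast
  have ne: "V \<noteq> {}" using cac unfolding cactus_def gconnected_def by blast
  define P where "P = CUT V E"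
  define PV where "PV = poly_vertices P"
  define D where "D = {skel_dist P x y | x y. x \<in> PV \<and> y \<in> PV}"
  have Deq: "D = (\<lambda>(x,y). skel_dist P x y) ` (PV \<times> PV)" unfolding D_def by auto
  have finPV: "finite PV" unfolding PV_def P_def pv_CC by (rule CC_fin)
  have finD: "finite D" unfolding Deq using finPV by simp
  have x0: "cut_vec E {} \<in> PV" unfolding PV_def P_def pv_CC CC_def by blast
  have neD: "D \<noteq> {}" unfolding D_def using x0 by blast
  have walk: "\<exists>xs n. n \<le> card V - 1 \<and> skel_walk P xs \<and> hd xs = x \<and> last xs = y \<and> length xs = Suc n"
    if "x \<in> PV" "y \<in> PV" for x y
    using dist_walk[OF g c ne] that unfolding PV_def P_def by blast
  have dle: "skel_dist P x y \<le> card V - 1" if xy: "x \<in> PV" "y \<in> PV" for x y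
  proof -
    obtain xs n where w: "n \<le> card V - 1" "skel_walk P xs" "hd xs = x" "last xs = y" "length xs = Suc n"
      using walk[OF xy] by blast
    have "skel_dist P x y \<le> n" unfolding skel_dist_def
      by (rule Least_le) (use w in auto)
    then show ?thesis using w(1) by linarith
  qed
  have up: "skel_diameter P \<le> card V - 1"
    unfolding skel_diameter_def PV_def[symmetric] D_def[symmetric]
  proof (rule Max.boundedI[OF finD neD])
    fix a assume "a \<in> D"
    then obtain x y where "x \<in> PV" "y \<in> PV" "a = skel_dist P x y" unfolding D_def by blast
    then show "a \<le> card V - 1" using dle by blast
  qed
  obtain r where r: "r \<in> V" using ne by blast
  obtain S0 where S0: "S0 \<subseteq> V" "card V - 1 \<le> card (delta E S0)" using maxcut[OF g c r] by blast
  define y0 where "y0 = cut_vec E S0"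
  define x0 where "x0 = cut_vec E {}"
  have y0: "y0 \<in> PV" unfolding y0_def PV_def P_def pv_CC CC_def using S0(1) by blast
  have x0': "x0 \<in> PV" using x0 unfolding x0_def .
  define n where "n = skel_dist P x0 y0"
  have ex: "\<exists>m xs. skel_walk P xs \<and> hd xs = x0 \<and> last xs = y0 \<and> length xs = m + 1"
    using walk[OF x0' y0] by fastforce
  have "\<exists>xs. skel_walk P xs \<and> hd xs = x0 \<and> last xs = y0 \<and> length xs = n + 1"
    unfolding n_def skel_dist_def by (rule LeastI_ex[OF ex])
  then obtain xs where xs: "skel_walk P xs" "hd xs = x0" "last xs = y0" "length xs = n + 1" by blast
  have "card {e. (xs!n)$e = 1} \<le> card {e. (hd xs)$e = 1} + 2*n"
    using walk_weight[OF cac, of xs n] xs(1,4) unfolding P_def by simp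
  moreover have "xs!n = y0" using xs(3,4) by (metis add_diff_cancel_right' last_conv_nth list.size(3) nat.distinct(1) Suc_eq_plus1)
  moreover have "card {e. (hd xs)$e = 1} = 0" unfolding xs(2) x0_def wt_cv delta_empty by simp
  moreover have "card {e. y0$e = 1} = card (delta E S0)" unfolding y0_def wt_cv ..
  ultimately have "card V - 1 \<le> 2 * n" using S0(2) by simp
  then have lo1: "card V div 2 \<le> n" by linarith
  have "n \<in> D" unfolding D_def n_def using x0' y0 by blast
  then have "n \<le> skel_diameter P" unfolding skel_diameter_def PV_def[symmetric] D_def[symmetric] using finD by simp
  then show ?thesis using lo1 up unfolding P_def by linarith
qed

end
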